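(* Let $\nu$ be a positive measure on the unit circle and let $\Phi_n(z,t)$ be the monic orthogonal polynomials for the measure $d\nu_t(\theta)=e^{t\cos\theta}\,d\nu(\theta)$, $z=e^{i\theta}$. Then for $n\ge1$ \[ \frac{d}{dt}\Phi_n(z,t) = -\frac{\kappa_{n-1}^2}{2\kappa_n^2}\Bigl(\Phi_{n-1}(z,t)+\overline{\alpha_n}\,\Phi_{n-1}^*(z,t)\Bigr). \]
   Context: The orthonormal polynomials $\varphi_n(z,t)=\kappa_n(t)z^n+\cdots$, $\kappa_n>0$, satisfy $\int_0^{2\pi}\varphi_n\overline{\varphi_m}\,d\nu_t(\theta)=\delta_{m,n}$ with $z=e^{i\theta}$, and $\Phi_n=\varphi_n/\kappa_n$. The reversed polynomial is $\Phi_n^*(z)=z^n\overline{\Phi_n(1/\bar z)}$. The Verblunsky coefficients are $\alpha_n(t)=-\overline{\Phi_{n+1}(0,t)}$, so that $z\Phi_n=\Phi_{n+1}+\overline{\alpha_n}\Phi_n^*$ and $\kappa_n^2/\kappa_{n+1}^2=1-|\alpha_n|^2$. *)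

theory Defs
  imports "HOL-Analysis.Analysis" "HOL-Computational_Algebra.Polynomial"
begin

text \<open>A positive (finite Borel) measure nu on the unit circle is represented, via
  z = e^{i theta}, as a finite Borel measure on the real line concentrated on [0, 2 pi].\<close>

definition circle_measure :: "real measure \<Rightarrow> bool" where
  "circle_measure nu \<longleftrightarrow> finite_measure nu \<and> sets nu = sets borel \<and>
     emeasure nu (- {0..2*pi}) = 0"

text \<open>Nontrivial: not supported on a finite set (needed so that all Phi_n exist).\<close>
definition nontrivial_measure :: "real measure \<Rightarrow> bool" where
  "nontrivial_measure nu \<longleftrightarrow> \<not> (\<exists>F. finite F \<and> emeasure nu (- F) = 0)"

definition nu_t :: "real measure \<Rightarrow> real \<Rightarrow> real measure" where
  "nu_t nu t = density nu (\<lambda>\<theta>. ennreal (exp (t * cos \<theta>)))"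

definition ip :: "real measure \<Rightarrow> real \<Rightarrow> complex poly \<Rightarrow> complex poly \<Rightarrow> complex" where
  "ip nu t p q = (\<integral>\<theta>. poly p (cis \<theta>) * cnj (poly q (cis \<theta>)) \<partial>(nu_t nu t))"

definition Phi :: "real measure \<Rightarrow> real \<Rightarrow> nat \<Rightarrow> complex poly" where
  "Phi nu t n = (THE p. degree p = n \<and> lead_coeff p = 1 \<and>
                  (\<forall>k<n. ip nu t p (monom 1 k) = 0))"

text \<open>kappa_n(t) > 0, the leading coefficient of the orthonormal polynomial
  phi_n = kappa_n Phi_n, i.e. kappa_n = 1 / ||Phi_n||.\<close>
definition kappa :: "real measure \<Rightarrow> real \<Rightarrow> nat \<Rightarrow> real" where
  "kappa nu t n = 1 / sqrt (Re (ip nu t (Phi nu t n) (Phi nu t n)))"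

text \<open>Reversed polynomial Phi_n^*(z) = z^n conj(Phi_n(1/conj z)).\<close>
definition Phi_star :: "real measure \<Rightarrow> real \<Rightarrow> nat \<Rightarrow> complex \<Rightarrow> complex" where
  "Phi_star nu t n z = (\<Sum>k\<le>n. cnj (coeff (Phi nu t n) k) * z ^ (n - k))"

definition alpha :: "real measure \<Rightarrow> real \<Rightarrow> nat \<Rightarrow> complex" where
  "alpha nu t n = - cnj (poly (Phi nu t (Suc n)) 0)"

end

theory Submission
  imports Defs
begin


definition bnd :: "(real \<Rightarrow> complex) \<Rightarrow> bool" where
  "bnd f \<longleftrightarrow> f \<in> borel_measurable borel \<and> (\<exists>B. \<forall>x. norm (f x) \<le> B)"

lemma bnd_mult: "bnd f \<Longrightarrow> bnd g \<Longrightarrow> bnd (\<lambda>x. f x * g x)"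
proof -
  assume a: "bnd f" "bnd g"
  then obtain B C where B: "\<forall>x. norm (f x) \<le> B" and C: "\<forall>x. norm (g x) \<le> C" by (auto simp: bnd_def)
  have "\<forall>x. norm (f x * g x) \<le> B * C"
    using B C by (simp add: norm_mult mult_mono')
  with a show ?thesis by (auto simp: bnd_def)
qed

lemma bnd_add: "bnd f \<Longrightarrow> bnd g \<Longrightarrow> bnd (\<lambda>x. f x + g x)"
proof -
  assume a: "bnd f" "bnd g"
  then obtain B C where B: "\<forall>x. norm (f x) \<le> B" and C: "\<forall>x. norm (g x) \<le> C" by (auto simp: bnd_def)
  have "\<forall>x. norm (f x + g x) \<le> B + C"
    using B C by (meson add_mono norm_triangle_le)
  with a show ?thesis by (auto simp: bnd_def)
qed

lemma bnd_const: "bnd (\<lambda>x. c)"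
  by (auto simp: bnd_def)

lemma bnd_cnj: "bnd f \<Longrightarrow> bnd (\<lambda>x. cnj (f x))"
proof -
  assume a: "bnd f"
  have c: "cnj \<in> borel_measurable borel"
    by (intro borel_measurable_continuous_onI continuous_intros)
  have "(\<lambda>x. cnj (f x)) = cnj \<circ> f" by auto
  then show ?thesis using a measurable_comp[OF _ c, of f borel] by (auto simp: bnd_def)
qed

lemma bnd_cos: "bnd (\<lambda>x. complex_of_real (cos x))"
proof -
  have "continuous_on UNIV (\<lambda>x. complex_of_real (cos x))" by (intro continuous_intros)
  then show ?thesis unfolding bnd_def
    by (auto intro!: borel_measurable_continuous_onI exI[of _ 1])
qed

lemma norm_poly_cis: "norm (poly p (cis x)) \<le> (\<Sum>i\<le>degree p. norm (coeff p i))"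
proof -
  have "norm (poly p (cis x)) = norm (\<Sum>i\<le>degree p. coeff p i * cis x ^ i)"
    by (simp add: poly_altdef)
  also have "\<dots> \<le> (\<Sum>i\<le>degree p. norm (coeff p i * cis x ^ i))" by (rule norm_sum)
  also have "\<dots> = (\<Sum>i\<le>degree p. norm (coeff p i))" by (simp add: norm_mult norm_power)
  finally show ?thesis .
qed

lemma bnd_poly: "bnd (\<lambda>x. poly p (cis x))"
proof -
  have "continuous_on UNIV (\<lambda>x. poly p (cis x))"
    by (intro continuous_intros)
  then show ?thesis unfolding bnd_def
    using norm_poly_cis by (auto intro!: borel_measurable_continuous_onI)
qed

lemma bnd_cispow: "bnd (\<lambda>x. cis x ^ k)"
  using bnd_poly[of "monom 1 k"] by (simp add: poly_monom)

locale circ =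
  fixes nu :: "real measure"
  assumes cm: "circle_measure nu" and nt: "nontrivial_measure nu"
begin

lemma fin: "finite_measure nu" and sets_nu: "sets nu = sets borel"
  and null: "emeasure nu (- {0..2*pi}) = 0"
  using cm by (auto simp: circle_measure_def)

lemma meas_nu: "borel_measurable nu = borel_measurable borel"
  by (rule measurable_cong_sets[OF sets_nu]) simp

definition w :: "real \<Rightarrow> real \<Rightarrow> real" where "w s x = exp (s * cos x)"

definition I :: "real \<Rightarrow> (real \<Rightarrow> complex) \<Rightarrow> complex" where
  "I s f = integral\<^sup>L nu (\<lambda>x. f x * complex_of_real (w s x))"

lemma bnd_w: "bnd (\<lambda>x. complex_of_real (w s x))"
proof -
  have "continuous_on UNIV (\<lambda>x. complex_of_real (w s x))" unfolding w_def by (intro continuous_intros)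
  moreover have "\<forall>x. norm (complex_of_real (w s x)) \<le> exp \<bar>s\<bar>"
  proof
    fix x
    have "s * cos x \<le> \<bar>s * cos x\<bar>" by (rule abs_ge_self)
    also have "\<dots> = \<bar>s\<bar> * \<bar>cos x\<bar>" by (rule abs_mult)
    also have "\<dots> \<le> \<bar>s\<bar> * 1" by (rule mult_left_mono) (simp_all add: abs_cos_le_one)
    finally have "s * cos x \<le> \<bar>s\<bar>" by simp
    then show "norm (complex_of_real (w s x)) \<le> exp \<bar>s\<bar>" by (simp add: w_def)
  qed
  ultimately show ?thesis unfolding bnd_def by (auto intro!: borel_measurable_continuous_onI)
qed

lemma integ: "bnd f \<Longrightarrow> integrable nu f"
proof -
  assume "bnd f"
  then obtain B where B: "\<forall>x. norm (f x) \<le> B" and m: "f \<in> borel_measurable borel" by (auto simp: bnd_def)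
  show ?thesis
    by (rule finite_measure.integrable_const_bound[OF fin, of _ B]) (use B m meas_nu in auto)
qed

lemma integw: "bnd f \<Longrightarrow> integrable nu (\<lambda>x. f x * complex_of_real (w s x))"
  by (intro integ bnd_mult bnd_w)

lemma I_add: "bnd f \<Longrightarrow> bnd g \<Longrightarrow> I s (\<lambda>x. f x + g x) = I s f + I s g"
  unfolding I_def by (simp add: distrib_right integw)

lemma I_diff: "bnd f \<Longrightarrow> bnd g \<Longrightarrow> I s (\<lambda>x. f x - g x) = I s f - I s g"
  unfolding I_def by (simp add: left_diff_distrib integw)

lemma I_cmult: "I s (\<lambda>x. c * f x) = c * I s f"
  unfolding I_def by (simp add: mult.assoc)

lemma I_sum: "(\<And>i. i \<in> A \<Longrightarrow> bnd (f i)) \<Longrightarrow> I s (\<lambda>x. \<Sum>i\<in>A. f i x) = (\<Sum>i\<in>A. I s (f i))"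
  unfolding I_def by (simp add: sum_distrib_right integw)

lemma I_cnj: "I s (\<lambda>x. cnj (f x)) = cnj (I s f)"
proof -
  have "(\<lambda>x. cnj (f x) * complex_of_real (w s x)) = (\<lambda>x. cnj (f x * complex_of_real (w s x)))" by simp
  then show ?thesis unfolding I_def by (simp only: Bochner_Integration.integral_cnj)
qed

lemma I_cong: "(\<And>x. f x = g x) \<Longrightarrow> I s f = I s g"
  using ext[of f g] by metis

lemma ip_I: "ip nu s p q = I s (\<lambda>x. poly p (cis x) * cnj (poly q (cis x)))"
proof -
  have m: "(\<lambda>x. poly p (cis x) * cnj (poly q (cis x))) \<in> borel_measurable nu"
    using bnd_mult[OF bnd_poly bnd_cnj[OF bnd_poly]] meas_nu by (auto simp: bnd_def)
  have mw: "(\<lambda>x. exp (s * cos x)) \<in> borel_measurable nu"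
  proof -
    have "continuous_on UNIV (\<lambda>x. exp (s * cos x))" by (intro continuous_intros)
    then show ?thesis unfolding meas_nu by (rule borel_measurable_continuous_onI)
  qed
  have e2: "(\<lambda>x. exp (s * cos x) *\<^sub>R (poly p (cis x) * cnj (poly q (cis x))))
     = (\<lambda>x. poly p (cis x) * cnj (poly q (cis x)) * complex_of_real (exp (s * cos x)))"
    by (rule ext) (simp add: scaleR_conv_of_real mult.commute)
  have "ip nu s p q = integral\<^sup>L (density nu (\<lambda>x. ennreal (exp (s * cos x)))) (\<lambda>x. poly p (cis x) * cnj (poly q (cis x)))"
    by (simp only: ip_def nu_t_def)
  also have "\<dots> = integral\<^sup>L nu (\<lambda>x. exp (s * cos x) *\<^sub>R (poly p (cis x) * cnj (poly q (cis x))))"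
    by (rule integral_density[OF m mw]) simp
  also have "\<dots> = I s (\<lambda>x. poly p (cis x) * cnj (poly q (cis x)))"
    unfolding I_def w_def by (simp only: e2)
  finally show ?thesis .
qed

end


lemma fin_cis: "finite {x::real. 0 \<le> x \<and> x \<le> 2*pi \<and> cis x = w}"
proof (cases "\<exists>b. 0 \<le> b \<and> b \<le> 2*pi \<and> cis b = w")
  case False
  then have "{x::real. 0 \<le> x \<and> x \<le> 2*pi \<and> cis x = w} = {}" by auto
  then show ?thesis by (metis finite.emptyI)
next
  case True
  then obtain b where b: "0 \<le> b" "b \<le> 2*pi" "cis b = w" by auto
  have "{x::real. 0 \<le> x \<and> x \<le> 2*pi \<and> cis x = w} \<subseteq> {b - 2*pi, b, b + 2*pi}"
  proof
    fix x assume x: "x \<in> {x::real. 0 \<le> x \<and> x \<le> 2*pi \<and> cis x = w}"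
    then have "exp (\<i> * complex_of_real x) = exp (\<i> * complex_of_real b)"
      using b by (simp add: cis_conv_exp)
    then obtain n :: int where n: "\<i> * complex_of_real x = \<i> * complex_of_real b + of_int (2 * n) * pi * \<i>"
      by (auto simp: exp_eq)
    have xb: "x = b + 2 * pi * real_of_int n"
      using arg_cong[OF n, of Im] by simp
    have "\<bar>x - b\<bar> \<le> 2 * pi" using x b by auto
    then have "2 * pi * \<bar>real_of_int n\<bar> \<le> 2 * pi * 1" using xb by (simp add: abs_mult)
    then have "\<bar>real_of_int n\<bar> \<le> 1" using pi_gt_zero by (simp only: mult_le_cancel_left_pos)
    then have "n = -1 \<or> n = 0 \<or> n = 1" by linarith
    then show "x \<in> {b - 2*pi, b, b + 2*pi}" using xb by auto
  qed
  then show ?thesis by (rule finite_subset) simp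
qed

definition rv :: "nat \<Rightarrow> complex poly \<Rightarrow> complex poly" where
  "rv n p = (\<Sum>k\<le>n. monom (cnj (coeff p k)) (n - k))"

lemma coeff_rev: "coeff (rv n p) j = (if j \<le> n then cnj (coeff p (n - j)) else 0)"
proof -
  have "coeff (rv n p) j = (\<Sum>k\<le>n. if n - k = j then cnj (coeff p k) else 0)"
    by (simp add: rv_def coeff_sum coeff_monom)
  also have "\<dots> = (if j \<le> n then cnj (coeff p (n - j)) else 0)"
  proof (cases "j \<le> n")
    case True
    have "(\<Sum>k\<le>n. if n - k = j then cnj (coeff p k) else 0) = (\<Sum>k\<le>n. if k = n - j then cnj (coeff p k) else 0)"
      by (rule sum.cong) (use True in auto)
    also have "\<dots> = cnj (coeff p (n - j))" by (simp add: sum.delta)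
    finally show ?thesis using True by simp
  next
    case False
    then show ?thesis by (intro trans[OF sum.neutral]) auto
  qed
  finally show ?thesis .
qed

lemma degree_rev: "degree (rv n p) \<le> n"
  by (rule degree_le) (simp add: coeff_rev)

lemma poly_rev: "poly (rv n p) x = (\<Sum>k\<le>n. cnj (coeff p k) * x ^ (n - k))"
  by (simp add: rv_def poly_sum poly_monom)

lemma poly_sum_lt: "(\<forall>i\<ge>n. coeff (q::complex poly) i = 0) \<Longrightarrow> poly q x = (\<Sum>i<n. coeff q i * x ^ i)"
proof -
  assume a: "\<forall>i\<ge>n. coeff q i = 0"
  show ?thesis
  proof (cases "q = 0")
    case True then show ?thesis by simp
  next
    case False
    then have "coeff q (degree q) \<noteq> 0" by simp
    then have d: "degree q < n" using a by (meson not_le)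
    have "poly q x = (\<Sum>i\<le>degree q. coeff q i * x ^ i)" by (simp add: poly_altdef)
    also have "\<dots> = (\<Sum>i<n. coeff q i * x ^ i)"
      by (rule sum.mono_neutral_left) (use d a in \<open>auto intro: le_degree\<close>)
    finally show ?thesis .
  qed
qed

lemma poly_sum_le: "degree (q::complex poly) \<le> n \<Longrightarrow> poly q x = (\<Sum>i\<le>n. coeff q i * x ^ i)"
proof -
  assume "degree q \<le> n"
  then have "\<forall>i\<ge>Suc n. coeff q i = 0" by (simp add: coeff_eq_0)
  from poly_sum_lt[OF this] show ?thesis by (simp add: lessThan_Suc_atMost)
qed

lemma cis_pow_cnj: "k \<le> n \<Longrightarrow> cis t ^ n * cnj (cis t ^ k) = cis t ^ (n - k)"
proof -
  assume k: "k \<le> n"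
  have e: "cis t ^ k * cnj (cis t ^ k) = 1" by (simp add: cis_cnj cis_mult power_mult_distrib[symmetric])
  have "cis t ^ n = cis t ^ (n - k) * cis t ^ k" using k by (metis le_add_diff_inverse2 power_add)
  then have "cis t ^ n * cnj (cis t ^ k) = cis t ^ (n - k) * (cis t ^ k * cnj (cis t ^ k))" by simp
  then show ?thesis using e by simp
qed

lemma cis_pow_cnj': "k \<le> n \<Longrightarrow> cis t ^ n * cnj (cis t) ^ k = cis t ^ (n - k)"
  using cis_pow_cnj[of k n t] by simp

lemma bnd_cnjpow: "bnd (\<lambda>x. cnj (cis x) ^ k)"
  using bnd_cnj[OF bnd_cispow[of k]] by simp

lemma poly_rev_cis: "degree p \<le> n \<Longrightarrow> poly (rv n p) (cis t) = cis t ^ n * cnj (poly p (cis t))"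
proof -
  assume d: "degree p \<le> n"
  have "cis t ^ n * cnj (poly p (cis t)) = cis t ^ n * (\<Sum>k\<le>n. cnj (coeff p k) * cnj (cis t ^ k))"
    by (simp add: poly_sum_le[OF d])
  also have "\<dots> = (\<Sum>k\<le>n. cnj (coeff p k) * (cis t ^ n * cnj (cis t ^ k)))"
    by (simp add: sum_distrib_left ac_simps)
  also have "\<dots> = (\<Sum>k\<le>n. cnj (coeff p k) * cis t ^ (n - k))"
    by (rule sum.cong) (simp_all add: cis_pow_cnj cis_pow_cnj')
  finally show ?thesis by (simp add: poly_rev)
qed

abbreviation mon :: "nat \<Rightarrow> complex poly" where "mon k \<equiv> monom 1 k"

context circ
begin

lemma bnd_pp: "bnd (\<lambda>x. poly p (cis x) * cnj (poly q (cis x)))"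
  by (intro bnd_mult bnd_poly bnd_cnj)

lemma ip_diff1: "ip nu s (p - q) r = ip nu s p r - ip nu s q r"
  unfolding ip_I by (simp add: left_diff_distrib I_diff[OF bnd_pp bnd_pp])

lemma ip_add1: "ip nu s (p + q) r = ip nu s p r + ip nu s q r"
  unfolding ip_I by (simp add: distrib_right I_add[OF bnd_pp bnd_pp])

lemma ip_diff2: "ip nu s r (p - q) = ip nu s r p - ip nu s r q"
  unfolding ip_I by (simp add: right_diff_distrib I_diff[OF bnd_pp bnd_pp])

lemma ip_add2: "ip nu s r (p + q) = ip nu s r p + ip nu s r q"
  unfolding ip_I by (simp add: distrib_left I_add[OF bnd_pp bnd_pp])

lemma ip_smult1: "ip nu s (smult c p) r = c * ip nu s p r"
  unfolding ip_I by (simp add: I_cmult mult.assoc)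

lemma ip_smult2: "ip nu s r (smult c p) = cnj c * ip nu s r p"
proof -
  have "ip nu s r (smult c p) = I s (\<lambda>x. cnj c * (poly r (cis x) * cnj (poly p (cis x))))"
    unfolding ip_I by (rule I_cong) (simp add: ac_simps)
  then show ?thesis by (simp add: I_cmult ip_I)
qed

lemma ip_mon: "ip nu s p (mon k) = I s (\<lambda>x. poly p (cis x) * cnj (cis x ^ k))"
  unfolding ip_I by (simp add: poly_monom)

lemma ip_orth:
  assumes o: "\<forall>k<n. ip nu s p (mon k) = 0" and q: "\<forall>i\<ge>n. coeff q i = 0"
  shows "ip nu s p q = 0"
proof -
  have "ip nu s p q = I s (\<lambda>x. \<Sum>i<n. cnj (coeff q i) * (poly p (cis x) * cnj (cis x ^ i)))"
    unfolding ip_I by (rule I_cong) (simp add: poly_sum_lt[OF q] sum_distrib_left ac_simps)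
  also have "\<dots> = (\<Sum>i<n. cnj (coeff q i) * ip nu s p (mon i))"
    by (subst I_sum) (auto intro!: bnd_mult bnd_poly bnd_cnj bnd_cispow bnd_const bnd_cnjpow simp: I_cmult ip_mon)
  also have "\<dots> = 0" using o by simp
  finally show ?thesis .
qed

lemma ip_self: "ip nu s p p = complex_of_real (integral\<^sup>L nu (\<lambda>x. (cmod (poly p (cis x)))\<^sup>2 * w s x))"
proof -
  have "ip nu s p p = I s (\<lambda>x. complex_of_real ((cmod (poly p (cis x)))\<^sup>2))"
    unfolding ip_I by (rule I_cong) (simp add: complex_mult_cnj cmod_power2)
  also have "\<dots> = integral\<^sup>L nu (\<lambda>x. complex_of_real ((cmod (poly p (cis x)))\<^sup>2 * w s x))"
    unfolding I_def by (simp only: of_real_mult)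
  also have "\<dots> = complex_of_real (integral\<^sup>L nu (\<lambda>x. (cmod (poly p (cis x)))\<^sup>2 * w s x))"
    by (rule integral_complex_of_real)
  finally show ?thesis .
qed

lemma space_nu: "space nu = UNIV"
  using sets_eq_imp_space_eq[OF sets_nu] by simp

lemma w_pos: "w s x > 0" by (simp add: w_def)

lemma ip_pos:
  assumes "p \<noteq> 0"
  shows "Re (ip nu s p p) > 0"
proof -
  define J where "J = integral\<^sup>L nu (\<lambda>x. (cmod (poly p (cis x)))\<^sup>2 * w s x)"
  have ipJ: "Re (ip nu s p p) = J" by (simp add: ip_self J_def)
  have bJ: "bnd (\<lambda>x. complex_of_real ((cmod (poly p (cis x)))\<^sup>2 * w s x))"
  proof -
    have "bnd (\<lambda>x. poly p (cis x) * cnj (poly p (cis x)) * complex_of_real (w s x))"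
      by (intro bnd_mult bnd_poly bnd_cnj bnd_w)
    moreover have "(\<lambda>x. poly p (cis x) * cnj (poly p (cis x)) * complex_of_real (w s x)) =
       (\<lambda>x. complex_of_real ((cmod (poly p (cis x)))\<^sup>2 * w s x))"
      by (rule ext) (simp add: complex_mult_cnj cmod_power2)
    ultimately show ?thesis by simp
  qed
  have intJ: "integrable nu (\<lambda>x. (cmod (poly p (cis x)))\<^sup>2 * w s x)"
    using integ[OF bJ] by (simp only: complex_of_real_integrable_eq)
  have J0: "J \<ge> 0" unfolding J_def by (rule Bochner_Integration.integral_nonneg) (simp add: w_def)
  show ?thesis
  proof (rule ccontr)
    assume "\<not> Re (ip nu s p p) > 0"
    then have "J = 0" using ipJ J0 by simp
    then have "AE x in nu. (cmod (poly p (cis x)))\<^sup>2 * w s x = 0"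
      using integral_nonneg_eq_0_iff_AE[OF intJ] unfolding J_def by (simp add: w_def)
    then have ae1: "AE x in nu. poly p (cis x) = 0"
      by (rule AE_mp) (auto simp: w_def)
    have nullset: "- {0..2*pi} \<in> null_sets nu"
      using null by (intro null_setsI) (auto simp: sets_nu)
    have ae2: "AE x in nu. x \<in> {0..2*pi}"
      by (rule AE_I'[OF nullset]) auto
    define Z where "Z = {x. 0 \<le> x \<and> x \<le> 2*pi \<and> poly p (cis x) = 0}"
    have Zfin: "finite Z"
    proof -
      have "Z \<subseteq> (\<Union>r\<in>{r. poly p r = 0}. {x::real. 0 \<le> x \<and> x \<le> 2*pi \<and> cis x = r})"
        unfolding Z_def by auto
      moreover have "finite (\<Union>r\<in>{r. poly p r = 0}. {x::real. 0 \<le> x \<and> x \<le> 2*pi \<and> cis x = r})"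
        using poly_roots_finite[OF assms] fin_cis by blast
      ultimately show ?thesis by (rule finite_subset)
    qed
    have ae3: "AE x in nu. x \<in> Z"
      using ae1 ae2 by eventually_elim (auto simp: Z_def)
    have "- Z \<in> sets nu"
      using Zfin by (simp add: sets_nu finite_imp_closed borel_closed)
    moreover have "{x \<in> space nu. \<not> x \<in> Z} = - Z" by (auto simp: space_nu)
    ultimately have "emeasure nu (- Z) = 0"
      using AE_iff_measurable[of "- Z" nu "\<lambda>x. x \<in> Z"] ae3 by blast
    then show False using nt Zfin unfolding nontrivial_measure_def by blast
  qed
qed

lemma ip_self_real: "ip nu s p p = complex_of_real (Re (ip nu s p p))"
  by (simp add: ip_self)

lemma ip_rev:
  assumes "degree p \<le> n" "k \<le> n"
  shows "ip nu s (rv n p) (mon k) = cnj (ip nu s p (mon (n - k)))"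
proof -
  have "ip nu s (rv n p) (mon k) = I s (\<lambda>x. cnj (poly p (cis x) * cnj (cis x ^ (n - k))))"
    unfolding ip_mon
  proof (rule I_cong)
    fix x
    have "poly (rv n p) (cis x) * cnj (cis x ^ k) = cnj (poly p (cis x)) * (cis x ^ n * cnj (cis x ^ k))"
      by (simp add: poly_rev_cis[OF assms(1)] ac_simps)
    also have "\<dots> = cnj (poly p (cis x) * cnj (cis x ^ (n - k)))"
      by (simp add: cis_pow_cnj[OF assms(2)] cis_pow_cnj'[OF assms(2)])
    finally show "poly (rv n p) (cis x) * cnj (cis x ^ k) = cnj (poly p (cis x) * cnj (cis x ^ (n - k)))" .
  qed
  also have "\<dots> = cnj (I s (\<lambda>x. poly p (cis x) * cnj (cis x ^ (n - k))))" by (rule I_cnj)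
  also have "\<dots> = cnj (ip nu s p (mon (n - k)))" by (simp only: ip_mon)
  finally show ?thesis .
qed

lemma ip_shift: "ip nu s (pCons 0 p) (mon (Suc k)) = ip nu s p (mon k)"
  unfolding ip_mon
proof (rule I_cong)
  fix x
  have "cis x * cnj (cis x) = 1" by (simp add: cis_cnj cis_mult)
  then show "poly (pCons 0 p) (cis x) * cnj (cis x ^ Suc k) = poly p (cis x) * cnj (cis x ^ k)"
    by (simp add: algebra_simps)
qed

end


context circ
begin

definition cc :: "real \<Rightarrow> complex poly \<Rightarrow> complex" where
  "cc s P = ip nu s (pCons 0 P) (mon 0) / ip nu s P P"

fun Psi :: "real \<Rightarrow> nat \<Rightarrow> complex poly" where
  "Psi s 0 = 1"
| "Psi s (Suc n) = pCons 0 (Psi s n) - smult (cc s (Psi s n)) (rv n (Psi s n))"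

lemma ip_top:
  assumes d: "degree P = n" and c: "coeff P n = 1" and o: "\<forall>k<n. ip nu s P (mon k) = 0"
  shows "ip nu s P (mon n) = ip nu s P P"
proof -
  have "ip nu s P P = ip nu s P (mon n + (P - mon n))" by simp
  also have "\<dots> = ip nu s P (mon n) + ip nu s P (P - mon n)" by (rule ip_add2)
  also have "ip nu s P (P - mon n) = 0"
  proof (rule ip_orth[OF o], intro allI impI)
    fix i assume "n \<le> i"
    then show "coeff (P - mon n) i = 0"
      using c d by (cases "i = n") (auto simp: coeff_monom coeff_eq_0)
  qed
  finally show ?thesis by simp
qed

lemma ip_self_cnj: "cnj (ip nu s P P) = ip nu s P P"
  using ip_self_real[of s P] by (metis complex_cnj_complex_of_real)

lemma ip_self_nz: "P \<noteq> 0 \<Longrightarrow> ip nu s P P \<noteq> 0"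
  using ip_pos[of P s] by auto

lemma Psi_spec: "degree (Psi s n) = n \<and> coeff (Psi s n) n = 1 \<and> (\<forall>k<n. ip nu s (Psi s n) (mon k) = 0)"
proof (induction n)
  case 0
  then show ?case by simp
next
  case (Suc n)
  define P where "P = Psi s n"
  define c where "c = cc s P"
  have dP: "degree P = n" and cP: "coeff P n = 1" and oP: "\<forall>k<n. ip nu s P (mon k) = 0"
    using Suc.IH by (auto simp: P_def)
  have P0: "P \<noteq> 0" using cP by auto
  have Q: "Psi s (Suc n) = pCons 0 P - smult c (rv n P)" by (simp add: P_def c_def)
  have cQ: "coeff (Psi s (Suc n)) j = coeff (pCons 0 P) j - c * coeff (rv n P) j" for j
    unfolding Q by simp
  have c1: "coeff (Psi s (Suc n)) (Suc n) = 1"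
    by (simp add: cQ coeff_rev cP del: Psi.simps)
  have c2: "\<forall>j>Suc n. coeff (Psi s (Suc n)) j = 0"
  proof (intro allI impI)
    fix j assume j: "Suc n < j"
    then obtain i where i: "j = Suc i" "n < i" by (cases j) auto
    then show "coeff (Psi s (Suc n)) j = 0"
      by (simp add: cQ coeff_rev coeff_eq_0 dP del: Psi.simps)
  qed
  have dQ: "degree (Psi s (Suc n)) = Suc n"
  proof (rule antisym)
    show "degree (Psi s (Suc n)) \<le> Suc n" by (rule degree_le[OF c2])
    show "Suc n \<le> degree (Psi s (Suc n))" by (rule le_degree) (simp only: c1, simp)
  qed
  have NP: "ip nu s P P \<noteq> 0" by (rule ip_self_nz[OF P0])
  have topP: "ip nu s P (mon n) = ip nu s P P" by (rule ip_top[OF dP cP oP])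
  have oQ: "ip nu s (Psi s (Suc n)) (mon k) = 0" if k: "k < Suc n" for k
  proof -
    have e: "ip nu s (Psi s (Suc n)) (mon k) = ip nu s (pCons 0 P) (mon k) - c * ip nu s (rv n P) (mon k)"
      by (simp add: Q ip_diff1 ip_smult1 del: Psi.simps)
    show ?thesis
    proof (cases k)
      case 0
      have "ip nu s (rv n P) (mon 0) = cnj (ip nu s P (mon n))"
        using ip_rev[of P n 0 s] dP by simp
      also have "\<dots> = ip nu s P P" by (simp add: topP ip_self_cnj)
      finally have "ip nu s (rv n P) (mon 0) = ip nu s P P" .
      then show ?thesis using e 0 NP by (simp add: c_def cc_def)
    next
      case (Suc j)
      then have j: "j < n" using k by simp
      have a1: "ip nu s (pCons 0 P) (mon k) = 0" using Suc ip_shift[of s P j] oP j by simp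
      have "ip nu s (rv n P) (mon k) = cnj (ip nu s P (mon (n - k)))"
        using ip_rev[of P n k s] dP k by simp
      also have "\<dots> = 0" using oP Suc j by simp
      finally show ?thesis using e a1 by simp
    qed
  qed
  show ?case using dQ c1 oQ by blast
qed

lemma Phi_Psi: "Phi nu s n = Psi s n"
  unfolding Phi_def
proof (rule the_equality)
  show "degree (Psi s n) = n \<and> lead_coeff (Psi s n) = 1 \<and> (\<forall>k<n. ip nu s (Psi s n) (mon k) = 0)"
    using Psi_spec[of s n] by simp
next
  fix p assume p: "degree p = n \<and> lead_coeff p = 1 \<and> (\<forall>k<n. ip nu s p (mon k) = 0)"
  have ps: "degree (Psi s n) = n" "coeff (Psi s n) n = 1" "\<forall>k<n. ip nu s (Psi s n) (mon k) = 0"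
    using Psi_spec[of s n] by auto
  define d where "d = p - Psi s n"
  have o: "\<forall>k<n. ip nu s d (mon k) = 0" using p ps by (simp add: d_def ip_diff1)
  have cd: "\<forall>i\<ge>n. coeff d i = 0"
  proof (intro allI impI)
    fix i assume "n \<le> i"
    then show "coeff d i = 0" using p ps by (cases "i = n") (auto simp: d_def coeff_eq_0)
  qed
  have "ip nu s d d = 0" by (rule ip_orth[OF o cd])
  then have "d = 0" using ip_self_nz by blast
  then show "p = Psi s n" by (simp add: d_def)
qed

lemma Phi_deg: "degree (Phi nu s n) = n"
  and Phi_lead: "coeff (Phi nu s n) n = 1"
  and Phi_orth: "k < n \<Longrightarrow> ip nu s (Phi nu s n) (mon k) = 0"
  using Psi_spec[of s n] by (auto simp: Phi_Psi)

lemma Phi_nz: "Phi nu s n \<noteq> 0"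
  using Phi_lead[of s n] by auto

lemma Phi_top: "ip nu s (Phi nu s n) (mon n) = ip nu s (Phi nu s n) (Phi nu s n)"
  by (rule ip_top[OF Phi_deg Phi_lead]) (simp add: Phi_orth)

lemma Phi_Suc: "Phi nu s (Suc n) = pCons 0 (Phi nu s n) - smult (cc s (Phi nu s n)) (rv n (Phi nu s n))"
  by (simp add: Phi_Psi)

lemma alpha_cc: "cnj (alpha nu s n) = cc s (Phi nu s n)"
proof -
  have "poly (rv n (Phi nu s n)) 0 = 1"
    by (simp add: poly_0_coeff_0 coeff_rev Phi_lead)
  then show ?thesis
    by (simp add: alpha_def Phi_Suc)
qed

lemma Phi_star_rev: "Phi_star nu s n z = poly (rv n (Phi nu s n)) z"
  by (simp add: Phi_star_def poly_rev)

end


context circ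
begin

lemma w_le: "w s x \<le> exp \<bar>s\<bar>"
proof -
  have "s * cos x \<le> \<bar>s * cos x\<bar>" by (rule abs_ge_self)
  also have "\<dots> = \<bar>s\<bar> * \<bar>cos x\<bar>" by (rule abs_mult)
  also have "\<dots> \<le> \<bar>s\<bar> * 1" by (rule mult_left_mono) (simp_all add: abs_cos_le_one)
  finally have "s * cos x \<le> \<bar>s\<bar>" by simp
  then show ?thesis by (simp add: w_def)
qed

lemma exp_taylor2: fixes y :: real shows "\<bar>exp y - 1 - y\<bar> \<le> exp \<bar>y\<bar> * y\<^sup>2"
proof -
  obtain u where u: "\<bar>u\<bar> \<le> \<bar>y\<bar>" "exp y = (\<Sum>m<2. y ^ m / fact m) + exp u / fact 2 * y ^ 2"
    using Maclaurin_exp_le[of y 2] by blast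
  have s2: "(\<Sum>m<2. y ^ m / fact m) = 1 + y" by (simp add: numeral_2_eq_2)
  have "exp y - 1 - y = exp u / 2 * y\<^sup>2" using u(2) s2 by simp
  moreover have nn: "exp u / 2 * y\<^sup>2 \<ge> 0" by simp
  ultimately have "\<bar>exp y - 1 - y\<bar> = exp u / 2 * y\<^sup>2" by (simp only: abs_of_nonneg)
  also have "\<dots> \<le> exp u * y\<^sup>2" by (simp add: mult_right_mono)
  also have "\<dots> \<le> exp \<bar>y\<bar> * y\<^sup>2" using u(1) by (intro mult_right_mono) auto
  finally show ?thesis .
qed

lemma w_taylor: "\<bar>w (t + h) x - w t x - h * (cos x * w t x)\<bar> \<le> exp \<bar>t\<bar> * (h\<^sup>2 * exp \<bar>h\<bar>)"
proof -
  define y where "y = h * cos x"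
  have c1: "\<bar>cos x\<bar> \<le> 1" by (rule abs_cos_le_one)
  have yh: "\<bar>y\<bar> \<le> \<bar>h\<bar>" unfolding y_def abs_mult using c1
    by (metis abs_ge_zero mult.right_neutral mult_left_mono)
  have y2: "y\<^sup>2 \<le> h\<^sup>2" using yh by (metis abs_le_square_iff)
  have e: "w (t + h) x - w t x - h * (cos x * w t x) = w t x * (exp y - 1 - y)"
    by (simp add: w_def y_def distrib_right exp_add algebra_simps)
  have "\<bar>w (t + h) x - w t x - h * (cos x * w t x)\<bar> = w t x * \<bar>exp y - 1 - y\<bar>"
    unfolding e abs_mult using w_pos[of t x] by simp
  also have "\<dots> \<le> exp \<bar>t\<bar> * (exp \<bar>y\<bar> * y\<^sup>2)"
    by (intro mult_mono w_le exp_taylor2) auto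
  also have "\<dots> \<le> exp \<bar>t\<bar> * (h\<^sup>2 * exp \<bar>h\<bar>)"
    using yh y2 by (intro mult_left_mono) (auto simp: mult.commute intro!: mult_mono)
  finally show ?thesis .
qed

lemma I_deriv:
  assumes f: "bnd f"
  shows "((\<lambda>s. I s f) has_vector_derivative I t (\<lambda>x. f x * complex_of_real (cos x))) (at t)"
proof -
  obtain B where B: "\<forall>x. norm (f x) \<le> B" using f by (auto simp: bnd_def)
  have B0: "0 \<le> B" using B[rule_format, of 0] norm_ge_zero[of "f 0"] by linarith
  define V where "V = measure nu (space nu)"
  define D where "D = I t (\<lambda>x. f x * complex_of_real (cos x))"
  define C where "C = B * exp \<bar>t\<bar> * V"
  have fc: "bnd (\<lambda>x. f x * complex_of_real (cos x))" by (intro bnd_mult f bnd_cos)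
  have key: "norm (I (t + h) f - I t f - h *\<^sub>R D) \<le> C * (h\<^sup>2 * exp \<bar>h\<bar>)" for h
  proof -
    define g where "g x = f x * complex_of_real (w (t + h) x - w t x - h * (cos x * w t x))" for x
    have "I (t + h) f - I t f - h *\<^sub>R D
        = integral\<^sup>L nu (\<lambda>x. f x * complex_of_real (w (t + h) x)) - integral\<^sup>L nu (\<lambda>x. f x * complex_of_real (w t x))
          - complex_of_real h * integral\<^sup>L nu (\<lambda>x. f x * complex_of_real (cos x) * complex_of_real (w t x))"
      by (simp add: I_def D_def scaleR_conv_of_real)
    also have "\<dots> = integral\<^sup>L nu (\<lambda>x. f x * complex_of_real (w (t + h) x) - f x * complex_of_real (w t x)
          - complex_of_real h * (f x * complex_of_real (cos x) * complex_of_real (w t x)))"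
      using integw[OF f, of "t + h"] integw[OF f, of t] integw[OF fc, of t] by simp
    also have "\<dots> = integral\<^sup>L nu g"
      by (rule Bochner_Integration.integral_cong) (simp_all add: g_def algebra_simps)
    finally have eq: "I (t + h) f - I t f - h *\<^sub>R D = integral\<^sup>L nu g" .
    have gb: "norm (g x) \<le> B * (exp \<bar>t\<bar> * (h\<^sup>2 * exp \<bar>h\<bar>))" for x
      unfolding g_def norm_mult norm_of_real
      by (intro mult_mono w_taylor) (use B B0 in auto)
    have gi0: "integrable nu (\<lambda>x. f x * complex_of_real (w (t + h) x) - f x * complex_of_real (w t x)
          - complex_of_real h * (f x * complex_of_real (cos x) * complex_of_real (w t x)))"
      by (intro Bochner_Integration.integrable_diff integrable_mult_right integw f fc)
    have "g = (\<lambda>x. f x * complex_of_real (w (t + h) x) - f x * complex_of_real (w t x)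
          - complex_of_real h * (f x * complex_of_real (cos x) * complex_of_real (w t x)))"
      by (rule ext) (simp add: g_def algebra_simps)
    then have gi: "integrable nu g" using gi0 by simp
    have "norm (integral\<^sup>L nu g) \<le> integral\<^sup>L nu (\<lambda>x. norm (g x))" by (rule integral_norm_bound)
    also have "\<dots> \<le> integral\<^sup>L nu (\<lambda>x. B * (exp \<bar>t\<bar> * (h\<^sup>2 * exp \<bar>h\<bar>)))"
      by (rule Bochner_Integration.integral_mono) (use gi gb finite_measure.integrable_const[OF fin] in auto)
    also have "\<dots> = B * (exp \<bar>t\<bar> * (h\<^sup>2 * exp \<bar>h\<bar>)) * V"
      by (simp add: V_def)
    finally have "norm (integral\<^sup>L nu g) \<le> B * (exp \<bar>t\<bar> * (h\<^sup>2 * exp \<bar>h\<bar>)) * V" .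
    then show ?thesis unfolding eq C_def by (simp add: ac_simps)
  qed
  have lin: "bounded_linear (\<lambda>h. h *\<^sub>R D)" by (rule bounded_linear_scaleR_left)
  have lim: "(\<lambda>h. norm (I (t + h) f - I t f - h *\<^sub>R D) / norm h) \<midarrow>0\<rightarrow> 0"
  proof (rule Lim_null_comparison)
    show "\<forall>\<^sub>F h in at 0. norm (norm (I (t + h) f - I t f - h *\<^sub>R D) / norm h) \<le> C * (\<bar>h\<bar> * exp \<bar>h\<bar>)"
    proof (rule always_eventually, rule allI)
      fix h :: real
      show "norm (norm (I (t + h) f - I t f - h *\<^sub>R D) / norm h) \<le> C * (\<bar>h\<bar> * exp \<bar>h\<bar>)"
      proof (cases "h = 0")
        case True then show ?thesis by simp
      next
        case False
        have "norm (norm (I (t + h) f - I t f - h *\<^sub>R D) / norm h) = norm (I (t + h) f - I t f - h *\<^sub>R D) / \<bar>h\<bar>"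
          by simp
        also have "\<dots> \<le> C * (h\<^sup>2 * exp \<bar>h\<bar>) / \<bar>h\<bar>"
          using key[of h] False by (intro divide_right_mono) auto
        also have "\<dots> = C * (\<bar>h\<bar> * exp \<bar>h\<bar>)"
        proof -
          have a0: "\<bar>h\<bar> \<noteq> 0" using False by simp
          have eq: "C * (h\<^sup>2 * exp \<bar>h\<bar>) = (C * (\<bar>h\<bar> * exp \<bar>h\<bar>)) * \<bar>h\<bar>"
            by (simp add: power2_eq_square mult_ac)
          show ?thesis unfolding eq by (rule nonzero_mult_div_cancel_right[OF a0])
        qed
        finally show ?thesis .
      qed
    qed
    have "((\<lambda>h. C * (\<bar>h\<bar> * exp \<bar>h\<bar>)) \<longlongrightarrow> C * (\<bar>0\<bar> * exp \<bar>0\<bar>)) (at (0::real))"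
      by (intro tendsto_intros)
    then show "((\<lambda>h. C * (\<bar>h\<bar> * exp \<bar>h\<bar>)) \<longlongrightarrow> 0) (at (0::real))" by simp
  qed
  show ?thesis
    unfolding has_vector_derivative_def has_derivative_at D_def[symmetric]
    using lin lim by blast
qed

definition cdf :: "real \<Rightarrow> (real \<Rightarrow> complex poly) \<Rightarrow> bool" where
  "cdf t Q \<longleftrightarrow> (\<forall>k. (\<lambda>s. coeff (Q s) k) differentiable (at t))"

lemma ip_expand1: "degree p \<le> N \<Longrightarrow> ip nu s p r = (\<Sum>i\<le>N. coeff p i * ip nu s (mon i) r)"
proof -
  assume d: "degree p \<le> N"
  have "ip nu s p r = I s (\<lambda>x. \<Sum>i\<le>N. coeff p i * (cis x ^ i * cnj (poly r (cis x))))"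
    unfolding ip_I by (rule I_cong) (simp add: poly_sum_le[OF d] sum_distrib_right mult.assoc)
  also have "\<dots> = (\<Sum>i\<le>N. coeff p i * I s (\<lambda>x. cis x ^ i * cnj (poly r (cis x))))"
    by (subst I_sum) (auto intro!: bnd_mult bnd_poly bnd_cnj bnd_cispow bnd_const simp: I_cmult)
  also have "\<dots> = (\<Sum>i\<le>N. coeff p i * ip nu s (mon i) r)"
    by (simp add: ip_I poly_monom)
  finally show ?thesis .
qed

lemma ip_expand2: "degree q \<le> N \<Longrightarrow> ip nu s r q = (\<Sum>j\<le>N. cnj (coeff q j) * ip nu s r (mon j))"
proof -
  assume d: "degree q \<le> N"
  have "ip nu s r q = I s (\<lambda>x. \<Sum>j\<le>N. cnj (coeff q j) * (poly r (cis x) * cnj (cis x ^ j)))"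
    unfolding ip_I by (rule I_cong) (simp add: poly_sum_le[OF d] sum_distrib_left ac_simps)
  also have "\<dots> = (\<Sum>j\<le>N. cnj (coeff q j) * I s (\<lambda>x. poly r (cis x) * cnj (cis x ^ j)))"
    by (subst I_sum) (auto intro!: bnd_mult bnd_poly bnd_cnj bnd_cispow bnd_const bnd_cnjpow simp: I_cmult)
  also have "\<dots> = (\<Sum>j\<le>N. cnj (coeff q j) * ip nu s r (mon j))"
    by (simp add: ip_mon)
  finally show ?thesis .
qed

lemma mom_eq: "ip nu s (mon i) (mon j) = I s (\<lambda>x. cis x ^ i * cnj (cis x ^ j))"
  by (simp add: ip_I poly_monom)

lemma bnd_mom: "bnd (\<lambda>x. cis x ^ i * cnj (cis x ^ j))"
  by (intro bnd_mult bnd_cispow bnd_cnj)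

lemma mom_diffble: "(\<lambda>s. ip nu s (mon i) (mon j)) differentiable (at t)"
  unfolding mom_eq by (rule differentiableI_vector[OF I_deriv[OF bnd_mom]])

lemma ip_diffble:
  assumes P: "cdf t P" and Q: "cdf t Q" and dP: "\<And>s. degree (P s) \<le> N" and dQ: "\<And>s. degree (Q s) \<le> N"
  shows "(\<lambda>s. ip nu s (P s) (Q s)) differentiable (at t)"
proof -
  have eq: "(\<lambda>s. ip nu s (P s) (Q s)) =
     (\<lambda>s. \<Sum>j\<le>N. cnj (coeff (Q s) j) * (\<Sum>i\<le>N. coeff (P s) i * ip nu s (mon i) (mon j)))"
  proof (rule ext)
    fix s
    show "ip nu s (P s) (Q s) = (\<Sum>j\<le>N. cnj (coeff (Q s) j) * (\<Sum>i\<le>N. coeff (P s) i * ip nu s (mon i) (mon j)))"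
      by (simp add: ip_expand1[OF dP] ip_expand2[OF dQ])
  qed
  have cQ: "(\<lambda>s. cnj (coeff (Q s) j)) differentiable (at t)" for j
    using Q unfolding cdf_def by (simp add: differentiable_cnj_iff)
  show ?thesis unfolding eq
    using P cQ mom_diffble unfolding cdf_def
    by (intro differentiable_sum ballI differentiable_mult finite_atMost) auto
qed

lemma cdf_const: "cdf t (\<lambda>s. p)"
  by (simp add: cdf_def)

lemma cdf_pCons: "cdf t Q \<Longrightarrow> cdf t (\<lambda>s. pCons 0 (Q s))"
  unfolding cdf_def
proof (intro allI)
  fix k assume Q: "\<forall>k. (\<lambda>s. coeff (Q s) k) differentiable at t"
  show "(\<lambda>s. coeff (pCons 0 (Q s)) k) differentiable at t"
    using Q by (cases k) auto
qed

lemma Psi_cdf: "cdf t (\<lambda>s. Psi s n)"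
proof (induction n)
  case 0
  then show ?case by (simp add: cdf_const)
next
  case (Suc n)
  have dP: "degree (Psi s n) = n" for s using Psi_spec by blast
  have dP': "degree (pCons 0 (Psi s n)) \<le> Suc n" for s using dP[of s]
    by (metis degree_pCons_le)
  have dm: "degree (mon 0 :: complex poly) \<le> Suc n" by (simp add: degree_monom_eq)
  have a: "(\<lambda>s. ip nu s (pCons 0 (Psi s n)) (mon 0)) differentiable at t"
    by (rule ip_diffble[OF cdf_pCons[OF Suc.IH] cdf_const dP' dm])
  have b: "(\<lambda>s. ip nu s (Psi s n) (Psi s n)) differentiable at t"
    by (rule ip_diffble[OF Suc.IH Suc.IH, of n]) (simp_all add: dP)
  have nz: "ip nu t (Psi t n) (Psi t n) \<noteq> 0"
    by (rule ip_self_nz) (metis Phi_Psi Phi_nz)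
  have c: "(\<lambda>s. cc s (Psi s n)) differentiable at t"
    unfolding cc_def by (rule differentiable_divide[OF a b nz])
  have r: "(\<lambda>s. coeff (rv n (Psi s n)) k) differentiable at t" for k
    using Suc.IH unfolding cdf_def coeff_rev by (cases "k \<le> n") (simp_all add: differentiable_cnj_iff)
  have p: "(\<lambda>s. coeff (pCons 0 (Psi s n)) k) differentiable at t" for k
    using cdf_pCons[OF Suc.IH] unfolding cdf_def by blast
  show ?case unfolding cdf_def
    using p c r by (simp del: coeff_pCons)
qed

end


context circ
begin

lemma Phi_cdf: "cdf t (\<lambda>s. Phi nu s n)"
  using Psi_cdf[of t n] by (simp add: Phi_Psi)

lemma mom_deriv: "((\<lambda>s. ip nu s (mon i) (mon j)) has_vector_derivative
    I t (\<lambda>x. cis x ^ i * cnj (cis x ^ j) * complex_of_real (cos x))) (at t)"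
  unfolding mom_eq by (rule I_deriv[OF bnd_mom])

lemma cos_cis: "complex_of_real (cos x) = (cis x + cnj (cis x)) / 2"
  by (simp add: complex_eq_iff)

lemma J_eq:
  assumes dP: "degree P \<le> N"
  shows "(\<Sum>i\<le>N. coeff P i * I t (\<lambda>x. cis x ^ i * cnj (cis x ^ k) * complex_of_real (cos x)))
     = (ip nu t (pCons 0 P) (mon k) + ip nu t P (mon (Suc k))) / 2"
proof -
  have "(\<Sum>i\<le>N. coeff P i * I t (\<lambda>x. cis x ^ i * cnj (cis x ^ k) * complex_of_real (cos x)))
      = I t (\<lambda>x. \<Sum>i\<le>N. coeff P i * (cis x ^ i * cnj (cis x ^ k) * complex_of_real (cos x)))"
    by (subst I_sum) (auto intro!: bnd_mult bnd_cispow bnd_cnj bnd_cos bnd_const bnd_cnjpow simp: I_cmult)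
  also have "\<dots> = I t (\<lambda>x. (1/2) * (poly (pCons 0 P) (cis x) * cnj (cis x ^ k) + poly P (cis x) * cnj (cis x ^ Suc k)))"
  proof (rule I_cong)
    fix x
    have "(\<Sum>i\<le>N. coeff P i * (cis x ^ i * cnj (cis x ^ k) * complex_of_real (cos x)))
        = poly P (cis x) * cnj (cis x ^ k) * complex_of_real (cos x)"
      by (simp add: poly_sum_le[OF dP] sum_distrib_right mult.assoc)
    also have "\<dots> = (1/2) * (poly (pCons 0 P) (cis x) * cnj (cis x ^ k) + poly P (cis x) * cnj (cis x ^ Suc k))"
      unfolding cos_cis by (simp add: field_simps)
    finally show "(\<Sum>i\<le>N. coeff P i * (cis x ^ i * cnj (cis x ^ k) * complex_of_real (cos x)))
        = (1/2) * (poly (pCons 0 P) (cis x) * cnj (cis x ^ k) + poly P (cis x) * cnj (cis x ^ Suc k))" .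
  qed
  also have "\<dots> = (1/2) * (I t (\<lambda>x. poly (pCons 0 P) (cis x) * cnj (cis x ^ k)) + I t (\<lambda>x. poly P (cis x) * cnj (cis x ^ Suc k)))"
    by (simp only: I_cmult I_add[OF bnd_mult[OF bnd_poly bnd_cnj[OF bnd_cispow]] bnd_mult[OF bnd_poly bnd_cnj[OF bnd_cispow]]])
  also have "\<dots> = (ip nu t (pCons 0 P) (mon k) + ip nu t P (mon (Suc k))) / 2"
    by (simp add: ip_mon)
  finally show ?thesis .
qed

lemma main_loc:
  assumes n1: "n \<ge> 1"
  shows "((\<lambda>s. poly (Phi nu s n) z) has_vector_derivative
           (- complex_of_real ((kappa nu t (n - 1))\<^sup>2 / (2 * (kappa nu t n)\<^sup>2)) *
             (poly (Phi nu t (n - 1)) z + cnj (alpha nu t n) * Phi_star nu t (n - 1) z)))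
         (at t)"
proof -
  define m where "m = n - 1"
  have nm: "n = Suc m" using n1 m_def by simp
  define F where "F s = Phi nu s n" for s
  define d where "d k = vector_derivative (\<lambda>s. coeff (F s) k) (at t)" for k
  have dF: "degree (F s) = n" for s by (simp add: F_def Phi_deg)
  have hd: "((\<lambda>s. coeff (F s) k) has_vector_derivative d k) (at t)" for k
    using Phi_cdf[of t n] unfolding cdf_def F_def d_def by (metis vector_derivative_works)
  have d0: "d k = 0" if k: "n \<le> k" for k
  proof -
    have "(\<lambda>s. coeff (F s) k) = (\<lambda>s. if k = n then 1 else 0)"
    proof (rule ext)
      fix s show "coeff (F s) k = (if k = n then 1 else 0)"
        using k by (cases "k = n") (auto simp: F_def Phi_lead coeff_eq_0 Phi_deg)
    qed
    then have "((\<lambda>s. coeff (F s) k) has_vector_derivative 0) (at t)" by simp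
    then show ?thesis using hd[of k] vector_derivative_unique_at by blast
  qed
  define P' where "P' = (\<Sum>k\<le>n. monom (d k) k)"
  have cP': "coeff P' k = d k" for k
    using d0[of k] by (auto simp: P'_def coeff_sum coeff_monom)
  have dP': "degree P' \<le> n"
    by (rule degree_le) (simp add: cP' d0)
  have eqpoly: "(\<lambda>s. poly (F s) z) = (\<lambda>s. \<Sum>k\<le>n. coeff (F s) k * z ^ k)"
    by (rule ext) (simp add: poly_sum_le dF)
  have h1: "((\<lambda>s. poly (F s) z) has_vector_derivative (\<Sum>k\<le>n. d k * z ^ k)) (at t)"
    unfolding eqpoly by (intro has_vector_derivative_sum has_vector_derivative_mult_left hd)
  have polyP': "poly P' z = (\<Sum>k\<le>n. d k * z ^ k)" by (simp add: poly_sum_le[OF dP'] cP')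
  \<comment> \<open>differentiating the orthogonality relations\<close>
  have ipP': "ip nu t P' (mon k) = - (ip nu t (pCons 0 (F t)) (mon k) + ip nu t (F t) (mon (Suc k))) / 2"
    if k: "k < n" for k
  proof -
    define J where "J = (\<Sum>i\<le>n. coeff (F t) i * I t (\<lambda>x. cis x ^ i * cnj (cis x ^ k) * complex_of_real (cos x)))"
    have hg: "((\<lambda>s. \<Sum>i\<le>n. coeff (F s) i * ip nu s (mon i) (mon k)) has_vector_derivative
        (\<Sum>i\<le>n. coeff (F t) i * I t (\<lambda>x. cis x ^ i * cnj (cis x ^ k) * complex_of_real (cos x)) + d i * ip nu t (mon i) (mon k))) (at t)"
      by (intro has_vector_derivative_sum has_vector_derivative_mult hd mom_deriv)
    have g0: "(\<lambda>s. \<Sum>i\<le>n. coeff (F s) i * ip nu s (mon i) (mon k)) = (\<lambda>s. 0)"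
    proof (rule ext)
      fix s
      have "(\<Sum>i\<le>n. coeff (F s) i * ip nu s (mon i) (mon k)) = ip nu s (F s) (mon k)"
        by (rule ip_expand1[symmetric]) (simp add: dF)
      also have "\<dots> = 0" using k by (simp add: F_def Phi_orth)
      finally show "(\<Sum>i\<le>n. coeff (F s) i * ip nu s (mon i) (mon k)) = 0" .
    qed
    have "(\<Sum>i\<le>n. coeff (F t) i * I t (\<lambda>x. cis x ^ i * cnj (cis x ^ k) * complex_of_real (cos x)) + d i * ip nu t (mon i) (mon k)) = 0"
      using hg unfolding g0 using vector_derivative_unique_at has_vector_derivative_const by blast
    then have s0: "J + (\<Sum>i\<le>n. d i * ip nu t (mon i) (mon k)) = 0"
      by (simp add: J_def sum.distrib)
    have s1: "(\<Sum>i\<le>n. d i * ip nu t (mon i) (mon k)) = ip nu t P' (mon k)"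
      by (simp add: ip_expand1[OF dP'] cP')
    have Jeq: "J = (ip nu t (pCons 0 (F t)) (mon k) + ip nu t (F t) (mon (Suc k))) / 2"
      unfolding J_def by (rule J_eq) (simp add: dF)
    have "ip nu t P' (mon k) + J = 0" using s0 unfolding s1 by (simp add: add.commute)
    then have "ip nu t P' (mon k) = - J" by (simp only: eq_neg_iff_add_eq_0)
    then show ?thesis by (simp only: Jeq minus_divide_left)
  qed
  define G where "G = Phi nu t m"
  define N0 where "N0 = ip nu t (F t) (F t)"
  define N1 where "N1 = ip nu t G G"
  define R0 where "R0 = Re N0"
  define R1 where "R1 = Re N1"
  define c where "c = cc t (F t)"
  have N0r: "N0 = complex_of_real R0" unfolding N0_def R0_def by (rule ip_self_real)
  have N1r: "N1 = complex_of_real R1" unfolding N1_def R1_def by (rule ip_self_real)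
  have R0p: "R0 > 0" unfolding R0_def N0_def F_def by (rule ip_pos[OF Phi_nz])
  have R1p: "R1 > 0" unfolding R1_def N1_def G_def by (rule ip_pos[OF Phi_nz])
  have dG: "degree G = m" by (simp add: G_def Phi_deg)
  define D where "D = smult (- complex_of_real (R0 / (2 * R1))) (G + smult c (rv m G))"
  have A0: "ip nu t (pCons 0 (F t)) (mon 0) = c * N0"
  proof -
    have "N0 \<noteq> 0" unfolding N0_def F_def by (intro ip_self_nz Phi_nz)
    then show ?thesis by (simp add: c_def cc_def N0_def)
  qed
  have ipD: "ip nu t D (mon k) = ip nu t P' (mon k)" if k: "k < n" for k
  proof -
    have g1: "ip nu t G (mon k) = (if k = m then N1 else 0)"
      using k nm by (auto simp: G_def N1_def Phi_top Phi_orth)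
    have g2: "ip nu t (rv m G) (mon k) = (if k = 0 then N1 else 0)"
    proof -
      have "ip nu t (rv m G) (mon k) = cnj (ip nu t G (mon (m - k)))"
        by (rule ip_rev) (use k nm dG in auto)
      also have "\<dots> = (if k = 0 then N1 else 0)"
        using k nm by (auto simp: G_def N1_def Phi_top Phi_orth ip_self_cnj)
      finally show ?thesis .
    qed
    have f1: "ip nu t (pCons 0 (F t)) (mon k) = (if k = 0 then c * N0 else 0)"
    proof (cases k)
      case 0 then show ?thesis using A0 by simp
    next
      case (Suc j)
      then show ?thesis using ip_shift[of t "F t" j] k by (simp add: F_def Phi_orth)
    qed
    have f2: "ip nu t (F t) (mon (Suc k)) = (if k = m then N0 else 0)"
      using k nm by (auto simp: F_def N0_def Phi_top Phi_orth)
    have "ip nu t D (mon k) = - complex_of_real (R0 / (2 * R1)) * (ip nu t G (mon k) + c * ip nu t (rv m G) (mon k))"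
      by (simp only: D_def ip_smult1 ip_add1)
    also have "\<dots> = - ((if k = 0 then c * N0 else 0) + (if k = m then N0 else 0)) / 2"
      unfolding g1 g2 N0r N1r using R1p by (auto simp: field_simps)
    also have "\<dots> = ip nu t P' (mon k)"
      unfolding ipP'[OF k] f1 f2 ..
    finally show ?thesis .
  qed
  have PD: "P' = D"
  proof -
    have o: "\<forall>k<n. ip nu t (P' - D) (mon k) = 0" by (simp add: ip_diff1 ipD)
    have cz: "\<forall>i\<ge>n. coeff (P' - D) i = 0"
    proof (intro allI impI)
      fix i assume i: "n \<le> i"
      have "coeff G i = 0" using i nm dG by (simp add: coeff_eq_0)
      moreover have "coeff (rv m G) i = 0" using i nm by (simp add: coeff_rev)
      ultimately show "coeff (P' - D) i = 0" using i by (simp add: cP' d0 D_def)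
    qed
    have "ip nu t (P' - D) (P' - D) = 0" by (rule ip_orth[OF o cz])
    then have "P' - D = 0" using ip_self_nz by blast
    then show ?thesis by simp
  qed
  have kap: "(kappa nu t m)\<^sup>2 / (2 * (kappa nu t n)\<^sup>2) = R0 / (2 * R1)"
  proof -
    have k1: "(kappa nu t m)\<^sup>2 = 1 / R1" using R1p
      by (simp add: kappa_def R1_def N1_def G_def power_divide)
    have k2: "(kappa nu t n)\<^sup>2 = 1 / R0" using R0p
      by (simp add: kappa_def R0_def N0_def F_def power_divide)
    show ?thesis unfolding k1 k2 using R0p R1p by (simp add: field_simps)
  qed
  have val: "(\<Sum>k\<le>n. d k * z ^ k) = - complex_of_real ((kappa nu t (n - 1))\<^sup>2 / (2 * (kappa nu t n)\<^sup>2)) *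
             (poly (Phi nu t (n - 1)) z + cnj (alpha nu t n) * Phi_star nu t (n - 1) z)"
  proof -
    have "(\<Sum>k\<le>n. d k * z ^ k) = poly D z" using polyP' PD by simp
    also have "\<dots> = - complex_of_real (R0 / (2 * R1)) * (poly G z + c * poly (rv m G) z)"
      by (simp add: D_def)
    finally have val0: "(\<Sum>k\<le>n. d k * z ^ k) = - complex_of_real (R0 / (2 * R1)) * (poly G z + c * poly (rv m G) z)" .
    have e1: "(kappa nu t (n - 1))\<^sup>2 / (2 * (kappa nu t n)\<^sup>2) = R0 / (2 * R1)"
      using kap unfolding m_def .
    have e2: "poly (Phi nu t (n - 1)) z = poly G z" unfolding G_def m_def ..
    have e3: "cnj (alpha nu t n) * Phi_star nu t (n - 1) z = c * poly (rv m G) z"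
      unfolding alpha_cc Phi_star_rev c_def F_def G_def m_def ..
    show ?thesis by (simp only: val0 e1 e2 e3)
  qed
  show ?thesis using h1 unfolding val F_def .
qed

end


theorem mainTheorem4:
  fixes nu :: "real measure" and n :: nat and z :: complex and t :: real
  assumes "circle_measure nu" and "nontrivial_measure nu" and "n \<ge> 1"
  shows "((\<lambda>s. poly (Phi nu s n) z) has_vector_derivative
           (- complex_of_real ((kappa nu t (n - 1))\<^sup>2 / (2 * (kappa nu t n)\<^sup>2)) *
             (poly (Phi nu t (n - 1)) z + cnj (alpha nu t n) * Phi_star nu t (n - 1) z)))
         (at t)"
proof -
  interpret circ nu using assms(1,2) by unfold_locales
  show ?thesis by (rule main_loc[OF assms(3)])
qed

end
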